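(* Let $d\ge1$, $f\ge1$ and $q\ge 2f+1$ be integers, and let $H_1=\{1,\dots,q-f\}$ and $H_2=\{q+1,\dots,2q-f\}$. Then for all $(x_1,\dots,x_{2q})\in(\mathbb{R}^d)^{2q}$, $$\Big\|\mathrm{MDA}_f(x_1,\dots,x_q)-\mathrm{MDA}_f(x_{q+1},\dots,x_{2q})\Big\|_2\le 3\max_{(i,j)\in(H_1\cup H_2)^2}\|x_i-x_j\|_2 .$$
   Context: Minimum–Diameter Averaging: for integers $f\ge 0$, $q\ge 2f+1$ and vectors $x_1,\dots,x_q\in\mathbb{R}^d$, $\mathrm{MDA}_f(x_1,\dots,x_q)$ is defined as follows: among all index sets $I\subset\{1,\dots,q\}$ with $|I|=q-f$, choose one, $I^*$, minimizing $\max_{i,j\in I}\|x_i-x_j\|_2$ (ties broken arbitrarily); then $\mathrm{MDA}_f(x_1,\dots,x_q)=\frac{1}{q-f}\sum_{i\in I^*}x_i$. *)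

theory Defs
  imports "HOL-Analysis.Analysis"
begin

definition idx_diam :: "(nat \<Rightarrow> 'a::real_normed_vector) \<Rightarrow> nat set \<Rightarrow> real" where
  "idx_diam x I = Max {norm (x i - x j) | i j. i \<in> I \<and> j \<in> I}"

text \<open>I is an admissible choice of the MDA_f index set among the points indexed by S:
  a subset of S of size card S - f minimizing the diameter (ties broken arbitrarily).\<close>
definition is_mda_set :: "nat \<Rightarrow> (nat \<Rightarrow> 'a::real_normed_vector) \<Rightarrow> nat set \<Rightarrow> nat set \<Rightarrow> bool" where
  "is_mda_set f x S I \<longleftrightarrow> I \<subseteq> S \<and> card I = card S - f \<and>
     (\<forall>J. J \<subseteq> S \<and> card J = card S - f \<longrightarrow> idx_diam x I \<le> idx_diam x J)"

definition idx_avg :: "(nat \<Rightarrow> 'a::real_normed_vector) \<Rightarrow> nat set \<Rightarrow> 'a" where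
  "idx_avg x I = (1 / real (card I)) *\<^sub>R (\<Sum>i\<in>I. x i)"

end

theory Submission
  imports Defs
begin

lemma diam_ge:
  assumes "finite I" "i \<in> I" "j \<in> I"
  shows "norm (x i - x j) \<le> idx_diam x I"
proof -
  have "{norm (x i - x j) | i j. i \<in> I \<and> j \<in> I} = (\<lambda>(i,j). norm (x i - x j)) ` (I \<times> I)"
    by auto
  hence fin: "finite {norm (x i - x j) | i j. i \<in> I \<and> j \<in> I}" using assms by simp
  show ?thesis unfolding idx_diam_def
    by (rule Max_ge[OF fin]) (use assms in blast)
qed

lemma diam_le:
  assumes "finite I" "I \<noteq> {}" "\<And>i j. i \<in> I \<Longrightarrow> j \<in> I \<Longrightarrow> norm (x i - x j) \<le> c"
  shows "idx_diam x I \<le> c"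
proof -
  have "{norm (x i - x j) | i j. i \<in> I \<and> j \<in> I} = (\<lambda>(i,j). norm (x i - x j)) ` (I \<times> I)"
    by auto
  hence fin: "finite {norm (x i - x j) | i j. i \<in> I \<and> j \<in> I}" using assms by simp
  have ne: "{norm (x i - x j) | i j. i \<in> I \<and> j \<in> I} \<noteq> {}" using assms(2) by blast
  show ?thesis unfolding idx_diam_def
    using Max_le_iff[OF fin ne] assms(3) by blast
qed

lemma avg_le:
  fixes x :: "nat \<Rightarrow> 'a::real_normed_vector"
  assumes "finite I" "I \<noteq> {}" "\<And>i. i \<in> I \<Longrightarrow> norm (x i - y) \<le> c"
  shows "norm (idx_avg x I - y) \<le> c"
proof -
  have n: "real (card I) > 0" using assms by (simp add: card_gt_0_iff)
  have "idx_avg x I - y = (1 / real (card I)) *\<^sub>R (\<Sum>i\<in>I. x i - y)"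
    using n by (simp add: idx_avg_def sum_subtractf scaleR_diff_right)
      (simp add: sum_constant_scaleR)
  hence "norm (idx_avg x I - y) = (1 / real (card I)) * norm (\<Sum>i\<in>I. x i - y)"
    using n by simp
  also have "\<dots> \<le> (1 / real (card I)) * (\<Sum>i\<in>I. norm (x i - y))"
    using n by (intro mult_left_mono norm_sum) auto
  also have "\<dots> \<le> (1 / real (card I)) * (\<Sum>i\<in>I. c)"
    using n assms(3) by (intro mult_left_mono sum_mono) auto
  also have "\<dots> = c" using n by simp
  finally show ?thesis .
qed

lemma inter_ne:
  assumes "I \<subseteq> S" "H \<subseteq> S" "finite S" "card I + card H > card S"
  shows "I \<inter> H \<noteq> {}"
proof
  assume "I \<inter> H = {}"
  have "finite I" "finite H" using assms finite_subset by auto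
  hence "card (I \<union> H) = card I + card H" using card_Un_disjoint \<open>I \<inter> H = {}\<close> by blast
  moreover have "card (I \<union> H) \<le> card S" using assms by (intro card_mono) auto
  ultimately show False using assms by simp
qed

theorem mainTheorem2:
  fixes x :: "nat \<Rightarrow> 'a::euclidean_space" and f q :: nat and I J :: "nat set"
  assumes "f \<ge> 1" and "q \<ge> 2 * f + 1"
    and "is_mda_set f x {1..q} I"
    and "is_mda_set f x {q+1..2*q} J"
  shows "norm (idx_avg x I - idx_avg x J)
           \<le> 3 * idx_diam x ({1..q-f} \<union> {q+1..2*q-f})"
proof -
  define H1 where "H1 = {1..q-f}"
  define H2 where "H2 = {q+1..2*q-f}"
  define D where "D = idx_diam x (H1 \<union> H2)"
  have fH: "finite (H1 \<union> H2)" unfolding H1_def H2_def by simp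
  have I: "I \<subseteq> {1..q}" "card I = q - f"
    and Imin: "\<And>K. K \<subseteq> {1..q} \<Longrightarrow> card K = q - f \<Longrightarrow> idx_diam x I \<le> idx_diam x K"
    using assms(3) unfolding is_mda_set_def by auto
  have J: "J \<subseteq> {q+1..2*q}" "card J = q - f"
    and Jmin: "\<And>K. K \<subseteq> {q+1..2*q} \<Longrightarrow> card K = q - f \<Longrightarrow> idx_diam x J \<le> idx_diam x K"
    using assms(4) unfolding is_mda_set_def by auto
  have fI: "finite I" and fJ: "finite J" using I J finite_subset by auto
  have cH1: "card H1 = q - f" and cH2: "card H2 = q - f" unfolding H1_def H2_def using assms by auto
  have sH1: "H1 \<subseteq> {1..q}" and sH2: "H2 \<subseteq> {q+1..2*q}" unfolding H1_def H2_def by auto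
  have neH1: "H1 \<noteq> {}" and neH2: "H2 \<noteq> {}" using cH1 cH2 assms by auto
  have dH1: "idx_diam x H1 \<le> D" unfolding D_def
    by (rule diam_le) (use neH1 diam_ge[OF fH] in \<open>auto simp: H1_def\<close>)
  have dH2: "idx_diam x H2 \<le> D" unfolding D_def
    by (rule diam_le) (use neH2 diam_ge[OF fH] in \<open>auto simp: H2_def\<close>)
  have dI: "idx_diam x I \<le> D" using Imin[OF sH1 cH1] dH1 by simp
  have dJ: "idx_diam x J \<le> D" using Jmin[OF sH2 cH2] dH2 by simp
  have "I \<inter> H1 \<noteq> {}"
    by (rule inter_ne[OF I(1) sH1]) (use I cH1 assms in auto)
  then obtain i0 where i0: "i0 \<in> I" "i0 \<in> H1" by blast
  have "J \<inter> H2 \<noteq> {}"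
    by (rule inter_ne[OF J(1) sH2]) (use J cH2 assms in auto)
  then obtain j0 where j0: "j0 \<in> J" "j0 \<in> H2" by blast
  have a1: "norm (idx_avg x I - x i0) \<le> D"
  proof (rule avg_le[OF fI])
    show "I \<noteq> {}" using i0 by blast
    fix i assume "i \<in> I" thus "norm (x i - x i0) \<le> D" using diam_ge[OF fI _ i0(1), of i x] dI by linarith
  qed
  have a2: "norm (idx_avg x J - x j0) \<le> D"
  proof (rule avg_le[OF fJ])
    show "J \<noteq> {}" using j0 by blast
    fix i assume "i \<in> J" thus "norm (x i - x j0) \<le> D" using diam_ge[OF fJ _ j0(1), of i x] dJ by linarith
  qed
  have a3: "norm (x i0 - x j0) \<le> D" unfolding D_def
    by (rule diam_ge[OF fH]) (use i0 j0 in auto)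
  have "idx_avg x I - idx_avg x J = (idx_avg x I - x i0) + (x i0 - x j0) - (idx_avg x J - x j0)"
    by simp
  hence "norm (idx_avg x I - idx_avg x J) \<le> norm (idx_avg x I - x i0) + norm (x i0 - x j0) + norm (idx_avg x J - x j0)"
    using norm_triangle_ineq4[of "(idx_avg x I - x i0) + (x i0 - x j0)" "idx_avg x J - x j0"]
      norm_triangle_ineq[of "idx_avg x I - x i0" "x i0 - x j0"] by (simp only:)
  also have "\<dots> \<le> 3 * D" using a1 a2 a3 by simp
  finally show ?thesis unfolding D_def H1_def H2_def .
qed

end
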